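(* Let $1\le p<\infty$ (so that $E=\mathcal{L}^p(I)$ is a Banach space) and suppose $\alpha_n(t)\in\{\Lambda,-\Lambda\}$ with $\Lambda\neq 0$, for all $n=1,\dots,N$ and all $t\in I$. If $(b_m)$ is a Schauder basis of $E$, then $(0*_Tb_m)$ is a Schauder sequence of $E$.
   Context: Let $N\ge 2$, $I=[x_0,x_N]$, $\Delta: x_0<\dots<x_N$ a partition, $L_n(x)=a_nx+b_n$ affine with $L_n(x_0)=x_{n-1}$, $L_n(x_N)=x_n$, $I_1=[x_0,x_1]$, $I_n=(x_{n-1},x_n]$ for $n\ge2$, and $\alpha=(\alpha_1,\dots,\alpha_N)\in(\mathcal{L}^\infty(I))^N$ with $\Lambda:=\operatorname{ess\,sup}\{|\alpha_n(x)|:x\in I,n=1,\dots,N\}<1$. For $f,b\in E$, $f*_Tb$ is the unique fixed point in $E$ of the contraction $Tg(x):=f(x)+\alpha_n(L_n^{-1}(x))(g-b)(L_n^{-1}(x))$, $x\in I_n$; $0$ is the null function. A sequence $(x_m)$ in a Banach space is a Schauder sequence if it is a Schauder basis of its closed linear span. *)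

theory Defs
  imports "HOL-Analysis.Analysis"
begin

definition Ival :: "(nat \<Rightarrow> real) \<Rightarrow> nat \<Rightarrow> real set" where
  "Ival x N = {x 0 .. x N}"

definition in_Lp :: "real \<Rightarrow> real set \<Rightarrow> (real \<Rightarrow> real) \<Rightarrow> bool" where
  "in_Lp p I f \<longleftrightarrow> f \<in> borel_measurable (lebesgue_on I)
      \<and> integrable (lebesgue_on I) (\<lambda>t. \<bar>f t\<bar> powr p)"

definition Lp_norm :: "real \<Rightarrow> real set \<Rightarrow> (real \<Rightarrow> real) \<Rightarrow> real" where
  "Lp_norm p I f = (\<integral>t. \<bar>f t\<bar> powr p \<partial>lebesgue_on I) powr (1 / p)"

definition Lp_tendsto :: "real \<Rightarrow> real set \<Rightarrow> (nat \<Rightarrow> real \<Rightarrow> real) \<Rightarrow> (real \<Rightarrow> real) \<Rightarrow> bool" where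
  "Lp_tendsto p I s f \<longleftrightarrow> (\<lambda>n. Lp_norm p I (\<lambda>t. s n t - f t)) \<longlonglongrightarrow> 0"

definition Lp_closed_span :: "real \<Rightarrow> real set \<Rightarrow> (nat \<Rightarrow> real \<Rightarrow> real) \<Rightarrow> (real \<Rightarrow> real) set" where
  "Lp_closed_span p I y = {f. in_Lp p I f \<and>
      (\<forall>e>0. \<exists>k c. Lp_norm p I (\<lambda>t. f t - (\<Sum>m<k. c m * y m t)) < e)}"

definition Lp_schauder_basis_of :: "real \<Rightarrow> real set \<Rightarrow> (real \<Rightarrow> real) set \<Rightarrow> (nat \<Rightarrow> real \<Rightarrow> real) \<Rightarrow> bool" where
  "Lp_schauder_basis_of p I S y \<longleftrightarrow> (\<forall>m. y m \<in> S) \<and>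
      (\<forall>f\<in>S. \<exists>!c::nat \<Rightarrow> real. Lp_tendsto p I (\<lambda>n t. \<Sum>m<n. c m * y m t) f)"

definition Lp_schauder_basis :: "real \<Rightarrow> real set \<Rightarrow> (nat \<Rightarrow> real \<Rightarrow> real) \<Rightarrow> bool" where
  "Lp_schauder_basis p I y \<longleftrightarrow> Lp_schauder_basis_of p I {f. in_Lp p I f} y"

definition Lp_schauder_sequence :: "real \<Rightarrow> real set \<Rightarrow> (nat \<Rightarrow> real \<Rightarrow> real) \<Rightarrow> bool" where
  "Lp_schauder_sequence p I y \<longleftrightarrow> Lp_schauder_basis_of p I (Lp_closed_span p I y) y"

text \<open>Inverse of the affine map L_n with L_n(x 0) = x (n-1), L_n(x N) = x n.\<close>
definition Linv :: "(nat \<Rightarrow> real) \<Rightarrow> nat \<Rightarrow> nat \<Rightarrow> real \<Rightarrow> real" where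
  "Linv x N n t = x 0 + (t - x (n - 1)) * (x N - x 0) / (x n - x (n - 1))"

text \<open>Index n of the piece I_n containing t (I_1 = [x 0, x 1], I_n = (x (n-1), x n]).\<close>
definition piece :: "(nat \<Rightarrow> real) \<Rightarrow> nat \<Rightarrow> real \<Rightarrow> nat" where
  "piece x N t = (LEAST n. 1 \<le> n \<and> t \<le> x n)"

definition fractal_T :: "(nat \<Rightarrow> real) \<Rightarrow> nat \<Rightarrow> (nat \<Rightarrow> real \<Rightarrow> real) \<Rightarrow>
    (real \<Rightarrow> real) \<Rightarrow> (real \<Rightarrow> real) \<Rightarrow> (real \<Rightarrow> real) \<Rightarrow> real \<Rightarrow> real" where
  "fractal_T x N \<alpha> f b g t =
     (if t \<in> Ival x N then
        (let n = piece x N t; s = Linv x N n t in f t + \<alpha> n s * (g s - b s))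
      else 0)"

text \<open>f *_T b: the (a.e. unique) fixed point in L^p(I) of T.\<close>
definition fractal_fn :: "real \<Rightarrow> (nat \<Rightarrow> real) \<Rightarrow> nat \<Rightarrow> (nat \<Rightarrow> real \<Rightarrow> real) \<Rightarrow>
    (real \<Rightarrow> real) \<Rightarrow> (real \<Rightarrow> real) \<Rightarrow> (real \<Rightarrow> real)" where
  "fractal_fn p x N \<alpha> f b = (SOME g. in_Lp p (Ival x N) g \<and>
      (AE t in lebesgue_on (Ival x N). fractal_T x N \<alpha> f b g t = g t))"

end

theory Submission
  imports Defs
begin


locale fsetting =
  fixes p \<Lambda> :: real and N :: nat and x :: "nat \<Rightarrow> real" and \<alpha> :: "nat \<Rightarrow> real \<Rightarrow> real"
  assumes p1: "1 \<le> p"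
    and N2: "N \<ge> 2"
    and xinc: "\<And>i. i < N \<Longrightarrow> x i < x (Suc i)"
    and \<alpha>meas: "\<And>n. 1 \<le> n \<Longrightarrow> n \<le> N \<Longrightarrow> \<alpha> n \<in> borel_measurable (lebesgue_on (Ival x N))"
    and \<alpha>val: "\<And>n t. 1 \<le> n \<Longrightarrow> n \<le> N \<Longrightarrow> t \<in> Ival x N \<Longrightarrow> \<alpha> n t \<in> {\<Lambda>, - \<Lambda>}"
    and \<Lambda>pos: "0 < \<Lambda>" and \<Lambda>1: "\<Lambda> < 1"
begin

abbreviation "I \<equiv> Ival x N"
abbreviation "M \<equiv> lebesgue_on I"
definition "phi t = Linv x N (piece x N t) t"
definition "A t = \<alpha> (piece x N t) (phi t)"
definition "K = x N - x 0"
definition "L1 s = x 0 + (s - x 0) * (x 1 - x 0) / K"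
definition "J n = (if n = 1 then {x 0 .. x 1} else {x (n - 1) <.. x n})"

lemma x_mono: "i \<le> j \<Longrightarrow> j \<le> N \<Longrightarrow> x i \<le> x j"
proof (induction j)
  case 0 then show ?case by simp
next
  case (Suc j)
  then show ?case using xinc[of j] by (cases "i = Suc j") auto
qed

lemma x_strict: "i < j \<Longrightarrow> j \<le> N \<Longrightarrow> x i < x j"
  using x_mono[of i "j - 1"] xinc[of "j - 1"] by (cases j) auto

lemma K_pos: "K > 0" unfolding K_def using x_strict[of 0 N] N2 by auto

lemma space_M[simp]: "space M = I" by (simp add: space_restrict_space)

lemma I_eq: "I = {x 0 .. x N}" by (simp add: Ival_def)

lemma piece_props:
  assumes t: "t \<in> I"
  shows "1 \<le> piece x N t" "piece x N t \<le> N" "t \<le> x (piece x N t)"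
    "piece x N t = 1 \<or> x (piece x N t - 1) < t"
proof -
  let ?P = "\<lambda>n. 1 \<le> n \<and> t \<le> x n"
  have PN: "?P N" using t N2 by (auto simp: I_eq)
  have L: "?P (piece x N t)" unfolding piece_def by (rule LeastI[of ?P, OF PN])
  have le: "piece x N t \<le> N" unfolding piece_def by (rule Least_le[where P="?P" and k=N]) (rule PN)
  show "1 \<le> piece x N t" "piece x N t \<le> N" "t \<le> x (piece x N t)" using L le by auto
  show "piece x N t = 1 \<or> x (piece x N t - 1) < t"
  proof (rule ccontr)
    assume H: "\<not> ?thesis"
    then have "?P (piece x N t - 1)" using L by auto
    moreover have "piece x N t - 1 < piece x N t" using L H by auto
    ultimately show False unfolding piece_def using not_less_Least by blast
  qed
qed

lemma J_sub: assumes "1 \<le> n" "n \<le> N" shows "J n \<subseteq> I"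
proof -
  have "x 0 \<le> x (n-1)" "x n \<le> x N" "x 1 \<le> x N" using x_mono[of 0 "n-1"] x_mono[of n N] x_mono[of 1 N] N2 assms by auto
  then show ?thesis unfolding J_def I_eq by (auto split: if_splits)
qed

lemma piece_eq:
  assumes n: "1 \<le> n" "n \<le> N" and t: "t \<in> J n"
  shows "piece x N t = n"
  unfolding piece_def
proof (rule Least_equality)
  show "1 \<le> n \<and> t \<le> x n" using n t by (auto simp: J_def split: if_splits)
  fix m assume m: "1 \<le> m \<and> t \<le> x m"
  show "n \<le> m"
  proof (rule ccontr)
    assume "\<not> n \<le> m"
    then have "m \<le> n - 1" "n \<noteq> 1" using m by auto
    then have "x m \<le> x (n - 1)" using x_mono n by auto
    show False
    proof (cases "n = 1")
      case True then show False using \<open>\<not> n \<le> m\<close> m by auto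
    next
      case False then show False using t m \<open>x m \<le> x (n - 1)\<close> by (auto simp: J_def)
    qed
  qed
qed

lemma in_J: assumes "t \<in> I" shows "t \<in> J (piece x N t)"
  using piece_props[OF assms] assms by (auto simp: J_def I_eq)


lemma Linv_in:
  assumes n: "1 \<le> n" "n \<le> N" and t: "x (n - 1) \<le> t" "t \<le> x n"
  shows "Linv x N n t \<in> I"
proof -
  have d: "x (n - 1) < x n" using x_strict[of "n-1" n] n by auto
  have K: "x 0 < x N" using K_pos K_def by auto
  have a: "0 \<le> (t - x (n - 1)) / (x n - x (n - 1))" "(t - x (n - 1)) / (x n - x (n - 1)) \<le> 1"
    using t d by auto
  have "Linv x N n t = x 0 + ((t - x (n - 1)) / (x n - x (n - 1))) * (x N - x 0)"
    unfolding Linv_def by (simp add: field_simps)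
  moreover have "0 \<le> ((t - x (n - 1)) / (x n - x (n - 1))) * (x N - x 0)"
    using a K by (intro mult_nonneg_nonneg) auto
  moreover have "((t - x (n - 1)) / (x n - x (n - 1))) * (x N - x 0) \<le> x N - x 0"
    by (rule mult_left_le_one_le) (use a K in auto)
  ultimately show ?thesis unfolding I_eq atLeastAtMost_iff by linarith
qed

lemma phi_in: "t \<in> I \<Longrightarrow> phi t \<in> I"
  unfolding phi_def using piece_props[of t] Linv_in[of "piece x N t" t] x_mono[of 0 "piece x N t - 1"]
  by (auto simp: I_eq)

lemma L1_in: assumes "s \<in> I" shows "L1 s \<in> J 1" "L1 s \<in> I"
proof -
  have d: "x 0 < x 1" using x_strict[of 0 1] N2 by auto
  have a: "0 \<le> (s - x 0) / K" "(s - x 0) / K \<le> 1" using assms K_pos by (auto simp: I_eq K_def)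
  have "L1 s = x 0 + ((s - x 0) / K) * (x 1 - x 0)" unfolding L1_def by (simp add: field_simps)
  moreover have "0 \<le> ((s - x 0) / K) * (x 1 - x 0)" using a d by (intro mult_nonneg_nonneg) auto
  moreover have "((s - x 0) / K) * (x 1 - x 0) \<le> x 1 - x 0" by (rule mult_left_le_one_le) (use a d in auto)
  ultimately show "L1 s \<in> J 1" unfolding J_def atLeastAtMost_iff by simp
  then show "L1 s \<in> I" using J_sub[of 1] N2 by auto
qed

lemma piece_L1: "s \<in> I \<Longrightarrow> piece x N (L1 s) = 1"
  using piece_eq[of 1 "L1 s"] L1_in N2 by auto

lemma phi_L1: assumes "s \<in> I" shows "phi (L1 s) = s"
proof -
  have d: "x 0 < x 1" using x_strict[of 0 1] N2 by auto
  have "phi (L1 s) = Linv x N 1 (L1 s)" unfolding phi_def piece_L1[OF assms] by simp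
  also have "\<dots> = x 0 + (L1 s - x 0) * K / (x 1 - x 0)" unfolding Linv_def K_def by simp
  also have "L1 s - x 0 = (s - x 0) * (x 1 - x 0) / K" unfolding L1_def by simp
  also have "x 0 + (s - x 0) * (x 1 - x 0) / K * K / (x 1 - x 0) = s"
    using d K_pos by (simp add: field_simps)
  finally show ?thesis .
qed

lemma A_L1: "s \<in> I \<Longrightarrow> A (L1 s) = \<alpha> 1 s"
  unfolding A_def by (simp add: piece_L1 phi_L1)

lemma abs_A: "t \<in> I \<Longrightarrow> \<bar>A t\<bar> = \<Lambda>"
  unfolding A_def using \<alpha>val[of "piece x N t" "phi t"] piece_props[of t] phi_in[of t] \<Lambda>pos by auto

lemma abs_\<alpha>1: "s \<in> I \<Longrightarrow> \<bar>\<alpha> 1 s\<bar> = \<Lambda>"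
  using \<alpha>val[of 1 s] N2 \<Lambda>pos by auto

end



lemma aff_meas: "(\<lambda>y::real. t + c * y) \<in> lebesgue \<rightarrow>\<^sub>M lebesgue"
proof (cases "c = 0")
  case True then show ?thesis by simp
next
  case False then show ?thesis using lebesgue_affine_measurable[where c="\<lambda>_. c" and t=t] by simp
qed

lemma aff_integral:
  fixes H :: "real \<Rightarrow> ennreal"
  assumes H: "H \<in> borel_measurable lebesgue" and c: "c > 0"
  shows "(\<integral>\<^sup>+y. H (t + c * y) \<partial>lebesgue) = ennreal (1 / c) * (\<integral>\<^sup>+y. H y \<partial>lebesgue)"
proof -
  have "(\<integral>\<^sup>+y. H y \<partial>lebesgue) = ennreal c * (\<integral>\<^sup>+y. H (t + c * y) \<partial>lebesgue)"
    using nn_integral_real_affine_lebesgue[OF H, of c t] c by simp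
  then have "ennreal (1 / c) * (\<integral>\<^sup>+y. H y \<partial>lebesgue) = ennreal (1/c) * ennreal c * (\<integral>\<^sup>+y. H (t + c * y) \<partial>lebesgue)"
    by (simp add: mult.assoc)
  also have "ennreal (1/c) * ennreal c = 1" using c by (simp flip: ennreal_mult)
  finally show ?thesis by simp
qed

context fsetting begin

lemma I_sets[measurable]: "I \<in> sets lebesgue" by (simp add: I_eq)
lemma J_sets[measurable]: "J n \<in> sets lebesgue" by (simp add: J_def)
lemma J_sets_M: "J n \<inter> I \<in> sets M"
  by (simp add: sets_restrict_space_iff)

lemma Linv_affine: "1 \<le> n \<Longrightarrow> n \<le> N \<Longrightarrow>
   Linv x N n = (\<lambda>y. (x 0 - x (n - 1) * (K / (x n - x (n - 1)))) + (K / (x n - x (n - 1))) * y)"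
proof -
  assume n: "1 \<le> n" "n \<le> N"
  have d: "x n - x (n - 1) \<noteq> 0" using x_strict[of "n - 1" n] n by auto
  have g: "\<And>y a c d. c + (y - a) * K / d = (c - a * (K / d)) + (K / d) * y" for K :: real
    by (simp add: diff_divide_distrib algebra_simps)
  show ?thesis unfolding fun_eq_iff Linv_def K_def by (subst g) simp
qed

lemma Linv_meas: "Linv x N n \<in> lebesgue \<rightarrow>\<^sub>M lebesgue" if "1 \<le> n" "n \<le> N"
  using Linv_affine[OF that] aff_meas by metis

lemma phi_meas[measurable]: "phi \<in> M \<rightarrow>\<^sub>M M"
proof (rule measurable_piecewise_restrict[where C="J ` {1..N}"])
  show "countable (J ` {1..N})" by simp
  show "\<Omega> \<inter> space M \<in> sets M" if "\<Omega> \<in> J ` {1..N}" for \<Omega>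
    using that J_sets_M by auto
  show "space M \<subseteq> \<Union> (J ` {1..N})" using in_J piece_props by fastforce
  show "phi \<in> restrict_space M \<Omega> \<rightarrow>\<^sub>M M" if "\<Omega> \<in> J ` {1..N}" for \<Omega>
  proof -
    obtain n where n: "1 \<le> n" "n \<le> N" "\<Omega> = J n" using \<open>\<Omega> \<in> J ` {1..N}\<close> by auto
    have eq: "restrict_space M \<Omega> = restrict_space lebesgue (I \<inter> J n)"
      using n by (simp add: restrict_restrict_space)
    have "Linv x N n \<in> restrict_space lebesgue (I \<inter> J n) \<rightarrow>\<^sub>M restrict_space lebesgue I"
    proof (rule measurable_restrict_space3[OF Linv_meas[OF n(1,2)]])
      show "Linv x N n \<in> I \<inter> J n \<rightarrow> I"
        using Linv_in[OF n(1,2)] by (auto simp: J_def split: if_splits)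
    qed
    moreover have "\<And>t. t \<in> I \<inter> J n \<Longrightarrow> phi t = Linv x N n t"
      using piece_eq n by (auto simp: phi_def)
    ultimately show ?thesis unfolding eq
      by (subst measurable_cong[where g="Linv x N n"]) (auto simp: space_restrict_space)
  qed
qed


lemma indJ_meas[measurable]: "(\<lambda>t. indicator (J n) t :: ennreal) \<in> borel_measurable M"
  by (rule measurable_restrict_space1) simp

lemma Linv_in_iff:
  assumes n: "1 \<le> n" "n \<le> N" and t: "Linv x N n t \<in> I"
  shows "x (n - 1) \<le> t" "t \<le> x n"
proof -
  have d: "x (n - 1) < x n" using x_strict[of "n-1" n] n by auto
  define q where "q = (t - x (n - 1)) / (x n - x (n - 1))"
  have "Linv x N n t = x 0 + q * K"
    unfolding Linv_def K_def q_def by simp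
  then have "0 \<le> q * K" "q * K \<le> 1 * K"
    using t by (auto simp: I_eq K_def)
  then have "0 \<le> q" "q \<le> 1"
    using K_pos by (simp_all add: zero_le_mult_iff mult_le_cancel_right)
  then have "0 \<le> (t - x (n - 1)) / (x n - x (n - 1))" "(t - x (n - 1)) / (x n - x (n - 1)) \<le> 1"
    unfolding q_def .
  then show "x (n - 1) \<le> t" "t \<le> x n" using d by (simp_all add: zero_le_divide_iff divide_le_eq)
qed

lemma phi_piece_integral:
  fixes h :: "real \<Rightarrow> ennreal"
  assumes h[measurable]: "h \<in> borel_measurable M" and n: "1 \<le> n" "n \<le> N"
  shows "(\<integral>\<^sup>+t. h (phi t) * indicator (J n) t \<partial>M) = ennreal ((x n - x (n - 1)) / K) * (\<integral>\<^sup>+t. h t \<partial>M)"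
proof -
  define H where "H y = h y * indicator I y" for y
  have H[measurable]: "H \<in> borel_measurable lebesgue"
    using h unfolding H_def by (subst (asm) borel_measurable_restrict_space_iff_ennreal) auto
  define c where "c = K / (x n - x (n - 1))"
  define t0 where "t0 = x 0 - x (n - 1) * c"
  have d: "x (n - 1) < x n" using x_strict[of "n-1" n] n by auto
  have c: "c > 0" unfolding c_def using d K_pos by auto
  have Lv: "Linv x N n = (\<lambda>y. t0 + c * y)" unfolding t0_def c_def using Linv_affine[OF n] .
  have "(\<integral>\<^sup>+t. h (phi t) * indicator (J n) t \<partial>M) = (\<integral>\<^sup>+t. h (phi t) * indicator (J n) t * indicator I t \<partial>lebesgue)"
    by (simp add: nn_integral_restrict_space)
  also have "\<dots> = (\<integral>\<^sup>+t. H (t0 + c * t) * indicator (J n) t \<partial>lebesgue)"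
  proof (rule nn_integral_cong)
    fix t
    show "h (phi t) * indicator (J n) t * indicator I t = H (t0 + c * t) * indicator (J n) t"
    proof (cases "t \<in> J n")
      case True
      then have "t \<in> I" using J_sub[OF n] by auto
      moreover have "phi t = Linv x N n t" using piece_eq[OF n True] by (simp add: phi_def)
      ultimately show ?thesis using True phi_in[of t] by (simp add: H_def Lv)
    qed simp
  qed
  also have "\<dots> = (\<integral>\<^sup>+t. H (t0 + c * t) \<partial>lebesgue)"
  proof (rule nn_integral_cong_AE)
    have "AE t in lebesgue. t \<noteq> x (n - 1)" by (rule AE_completion) (rule AE_lborel_singleton)
    then show "AE t in lebesgue. H (t0 + c * t) * indicator (J n) t = H (t0 + c * t)"
    proof (rule eventually_mono)
      fix t assume tn: "t \<noteq> x (n - 1)"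
      show "H (t0 + c * t) * indicator (J n) t = H (t0 + c * t)"
      proof (cases "t0 + c * t \<in> I")
        case True
        then have "Linv x N n t \<in> I" by (simp add: Lv)
        from Linv_in_iff[OF n this] tn have "t \<in> J n" by (auto simp: J_def)
        then show ?thesis by simp
      qed (simp add: H_def)
    qed
  qed
  also have "\<dots> = ennreal (1 / c) * (\<integral>\<^sup>+y. H y \<partial>lebesgue)"
    by (rule aff_integral[OF H c])
  also have "(\<integral>\<^sup>+y. H y \<partial>lebesgue) = (\<integral>\<^sup>+t. h t \<partial>M)"
    by (simp add: nn_integral_restrict_space H_def)
  also have "1 / c = (x n - x (n - 1)) / K" unfolding c_def by simp
  finally show ?thesis .
qed

lemma telescope: "(\<Sum>n\<in>{1..N}. x n - x (n - 1)) = x N - x 0"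
proof -
  have "(\<Sum>n\<in>{1..N}. x n - x (n - 1)) = (\<Sum>i\<in>{0..<N}. x (Suc i) - x i)"
    by (rule sum.reindex_bij_witness[where i=Suc and j="\<lambda>n. n - 1"]) auto
  also have "\<dots> = x N - x 0" by (rule sum_lessThan_telescope[unfolded lessThan_atLeast0])
  finally show ?thesis .
qed

lemma phi_integral:
  fixes h :: "real \<Rightarrow> ennreal"
  assumes h[measurable]: "h \<in> borel_measurable M"
  shows "(\<integral>\<^sup>+t. h (phi t) \<partial>M) = (\<integral>\<^sup>+t. h t \<partial>M)"
proof -
  have "(\<integral>\<^sup>+t. h (phi t) \<partial>M) = (\<integral>\<^sup>+t. (\<Sum>n\<in>{1..N}. h (phi t) * indicator (J n) t) \<partial>M)"
  proof (rule nn_integral_cong)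
    fix t assume "t \<in> space M"
    then have t: "t \<in> I" by simp
    have "(\<Sum>n\<in>{1..N}. h (phi t) * indicator (J n) t) = (\<Sum>n\<in>{1..N}. if n = piece x N t then h (phi t) else 0)"
    proof (rule sum.cong)
      fix n assume "n \<in> {1..N}"
      then have n: "1 \<le> n" "n \<le> N" by auto
      show "h (phi t) * indicator (J n) t = (if n = piece x N t then h (phi t) else 0)"
      proof (cases "n = piece x N t")
        case True
        then show ?thesis using in_J[OF t] by simp
      next
        case False
        then have "t \<notin> J n" using piece_eq[OF n] by metis
        then show ?thesis using False by simp
      qed
    qed simp
    also have "\<dots> = h (phi t)" using piece_props[OF t] by simp
    finally show "h (phi t) = (\<Sum>n\<in>{1..N}. h (phi t) * indicator (J n) t)" by simp
  qed
  also have "\<dots> = (\<Sum>n\<in>{1..N}. \<integral>\<^sup>+t. h (phi t) * indicator (J n) t \<partial>M)"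
    by (rule nn_integral_sum) measurable
  also have "\<dots> = (\<Sum>n\<in>{1..N}. ennreal ((x n - x (n - 1)) / K) * (\<integral>\<^sup>+t. h t \<partial>M))"
    by (intro sum.cong refl phi_piece_integral[OF h]) auto
  also have "\<dots> = ennreal (\<Sum>n\<in>{1..N}. (x n - x (n - 1)) / K) * (\<integral>\<^sup>+t. h t \<partial>M)"
  proof -
    have "0 \<le> (x n - x (n - 1)) / K" if "n \<in> {1..N}" for n
    proof -
      have "x (n - 1) < x n" by (rule x_strict) (use that in auto)
      then show ?thesis using K_pos by simp
    qed
    then have "ennreal (\<Sum>n\<in>{1..N}. (x n - x (n - 1)) / K) = (\<Sum>n\<in>{1..N}. ennreal ((x n - x (n - 1)) / K))"
      by (intro sum_ennreal[symmetric]) auto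
    then show ?thesis by (simp add: sum_distrib_right)
  qed
  also have "(\<Sum>n\<in>{1..N}. (x n - x (n - 1)) / K) = 1"
    using telescope K_pos by (simp add: sum_divide_distrib[symmetric] K_def)
  finally show ?thesis by simp
qed

end


context fsetting begin

lemma L1_affine: "L1 = (\<lambda>s. (x 0 - x 0 * ((x 1 - x 0) / K)) + ((x 1 - x 0) / K) * s)"
proof -
  have g: "\<And>y a c d. c + (y - a) * d / K = (c - a * (d / K)) + (d / K) * y" for K :: real
    by (simp add: diff_divide_distrib algebra_simps)
  show ?thesis unfolding fun_eq_iff L1_def by (subst g) simp
qed

lemma L1_meas[measurable]: "L1 \<in> M \<rightarrow>\<^sub>M M"
proof (rule measurable_restrict_space3)
  show "L1 \<in> lebesgue \<rightarrow>\<^sub>M lebesgue" by (subst L1_affine) (rule aff_meas)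
  show "L1 \<in> I \<rightarrow> I" using L1_in by auto
qed

lemma L1_integral:
  fixes h :: "real \<Rightarrow> ennreal"
  assumes h[measurable]: "h \<in> borel_measurable M"
  shows "(\<integral>\<^sup>+t. h (L1 t) \<partial>M) \<le> ennreal (K / (x 1 - x 0)) * (\<integral>\<^sup>+t. h t \<partial>M)"
proof -
  define H where "H y = h y * indicator I y" for y
  have H[measurable]: "H \<in> borel_measurable lebesgue"
    using h unfolding H_def by (subst (asm) borel_measurable_restrict_space_iff_ennreal) auto
  define c where "c = (x 1 - x 0) / K"
  define t0 where "t0 = x 0 - x 0 * c"
  have d: "x 0 < x 1" using x_strict[of 0 1] N2 by auto
  have c: "c > 0" unfolding c_def using d K_pos by auto
  have Lv: "L1 = (\<lambda>y. t0 + c * y)" unfolding t0_def c_def using L1_affine .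
  have "(\<integral>\<^sup>+t. h (L1 t) \<partial>M) = (\<integral>\<^sup>+t. h (L1 t) * indicator I t \<partial>lebesgue)"
    by (simp add: nn_integral_restrict_space)
  also have "\<dots> \<le> (\<integral>\<^sup>+t. H (t0 + c * t) \<partial>lebesgue)"
  proof (rule nn_integral_mono)
    fix t
    show "h (L1 t) * indicator I t \<le> H (t0 + c * t)"
    proof (cases "t \<in> I")
      case True
      then show ?thesis using L1_in[OF True] by (simp add: H_def Lv)
    qed simp
  qed
  also have "\<dots> = ennreal (1 / c) * (\<integral>\<^sup>+y. H y \<partial>lebesgue)"
    by (rule aff_integral[OF H c])
  also have "(\<integral>\<^sup>+y. H y \<partial>lebesgue) = (\<integral>\<^sup>+t. h t \<partial>M)"
    by (simp add: nn_integral_restrict_space H_def)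
  also have "1 / c = K / (x 1 - x 0)" unfolding c_def by simp
  finally show ?thesis .
qed

lemma AE_transfer:
  assumes g[measurable]: "g \<in> M \<rightarrow>\<^sub>M M"
    and gi: "\<And>h::real \<Rightarrow> ennreal. h \<in> borel_measurable M \<Longrightarrow> (\<integral>\<^sup>+t. h (g t) \<partial>M) \<le> ennreal C * (\<integral>\<^sup>+t. h t \<partial>M)"
    and P: "AE s in M. P s"
  shows "AE t in M. P (g t)"
proof -
  from P obtain Z where Z: "{s \<in> space M. \<not> P s} \<subseteq> Z" "Z \<in> sets M" "emeasure M Z = 0"
    by (auto elim!: AE_E)
  have Zm[measurable]: "(\<lambda>s. indicator Z s :: ennreal) \<in> borel_measurable M" using Z(2) by simp
  have "(\<integral>\<^sup>+t. indicator Z (g t) \<partial>M) \<le> ennreal C * (\<integral>\<^sup>+t. indicator Z t \<partial>M)"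
    by (rule gi) simp
  also have "(\<integral>\<^sup>+t. indicator Z t \<partial>M) = 0" using Z by simp
  finally have "(\<integral>\<^sup>+t. indicator Z (g t) \<partial>M) = 0" by simp
  then have "AE t in M. (indicator Z (g t) :: ennreal) = 0"
    by (subst (asm) nn_integral_0_iff_AE) auto
  then show ?thesis
  proof (rule AE_mp[OF _ AE_I2[OF impI]])
    fix t assume t: "t \<in> space M" "(indicator Z (g t) :: ennreal) = 0"
    then have "g t \<in> space M" using measurable_space[OF g] by auto
    then show "P (g t)" using t Z(1) by (auto simp: indicator_def split: if_splits)
  qed
qed

lemma AE_phi: "AE s in M. P s \<Longrightarrow> AE t in M. P (phi t)"
  by (rule AE_transfer[where C=1]) (auto simp: phi_integral)

lemma AE_L1: "AE s in M. P s \<Longrightarrow> AE t in M. P (L1 t)"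
  by (rule AE_transfer[OF L1_meas L1_integral])

lemma phin_meas[measurable]: "(phi ^^ j) \<in> M \<rightarrow>\<^sub>M M"
  by (induction j) (auto intro: measurable_compose[OF _ phi_meas])

lemma phin_in: "t \<in> I \<Longrightarrow> (phi ^^ j) t \<in> I"
  by (induction j) (auto intro: phi_in)

lemma phin_integral:
  fixes h :: "real \<Rightarrow> ennreal"
  assumes h[measurable]: "h \<in> borel_measurable M"
  shows "(\<integral>\<^sup>+t. h ((phi ^^ j) t) \<partial>M) = (\<integral>\<^sup>+t. h t \<partial>M)"
proof (induction j)
  case 0 then show ?case by simp
next
  case (Suc j)
  have m: "(\<lambda>t. h ((phi ^^ j) t)) \<in> borel_measurable M"
    by (rule measurable_compose[OF phin_meas h])
  have "(\<integral>\<^sup>+t. h ((phi ^^ Suc j) t) \<partial>M) = (\<integral>\<^sup>+t. (\<lambda>s. h ((phi ^^ j) s)) (phi t) \<partial>M)"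
    by (simp add: funpow_Suc_right del: funpow.simps)
  also have "\<dots> = (\<integral>\<^sup>+t. h ((phi ^^ j) t) \<partial>M)" by (rule phi_integral[OF m])
  finally show ?case using Suc by simp
qed

lemma A_meas[measurable]: "A \<in> borel_measurable M"
proof -
  have "(\<lambda>t. \<Sum>n\<in>{1..N}. indicator (J n) t * \<alpha> n (phi t)) \<in> borel_measurable M"
  proof (intro borel_measurable_sum borel_measurable_times)
    fix n assume n: "n \<in> {1..N}"
    show "(\<lambda>t. indicator (J n) t :: real) \<in> borel_measurable M"
      by (rule measurable_restrict_space1) simp
    show "(\<lambda>t. \<alpha> n (phi t)) \<in> borel_measurable M"
      by (rule measurable_compose[OF phi_meas \<alpha>meas]) (use n in auto)
  qed
  moreover have "\<And>t. t \<in> space M \<Longrightarrow> (\<Sum>n\<in>{1..N}. indicator (J n) t * \<alpha> n (phi t)) = A t"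
  proof -
    fix t assume "t \<in> space M"
    then have t: "t \<in> I" by simp
    have "(\<Sum>n\<in>{1..N}. indicator (J n) t * \<alpha> n (phi t)) = (\<Sum>n\<in>{1..N}. if n = piece x N t then \<alpha> n (phi t) else 0)"
    proof (rule sum.cong)
      fix n assume "n \<in> {1..N}"
      then have n: "1 \<le> n" "n \<le> N" by auto
      show "indicator (J n) t * \<alpha> n (phi t) = (if n = piece x N t then \<alpha> n (phi t) else 0)"
      proof (cases "n = piece x N t")
        case True
        then show ?thesis using in_J[OF t] by simp
      next
        case False
        then have "t \<notin> J n" using piece_eq[OF n] by metis
        then show ?thesis using False by simp
      qed
    qed simp
    also have "\<dots> = A t" using piece_props[OF t] by (simp add: A_def)
    finally show "(\<Sum>n\<in>{1..N}. indicator (J n) t * \<alpha> n (phi t)) = A t" .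
  qed
  ultimately show ?thesis using measurable_cong by (metis (no_types, lifting))
qed

lemma \<alpha>1_meas[measurable]: "\<alpha> 1 \<in> borel_measurable M" using \<alpha>meas[of 1] N2 by auto

end


context fsetting begin

definition "Q f = (\<integral>t. \<bar>f t\<bar> powr p \<partial>M)"

lemma p_pos: "p > 0" using p1 by simp

lemma Q_nonneg: "Q f \<ge> 0" unfolding Q_def by (rule Bochner_Integration.integral_nonneg) auto

lemma Lp_meas: "in_Lp p I f \<Longrightarrow> f \<in> borel_measurable M" by (simp add: in_Lp_def)
lemma Lp_int: "in_Lp p I f \<Longrightarrow> integrable M (\<lambda>t. \<bar>f t\<bar> powr p)" by (simp add: in_Lp_def)

lemma Lp_dom:
  assumes f: "f \<in> borel_measurable M" and G: "integrable M G"
    and le: "\<And>t. t \<in> I \<Longrightarrow> \<bar>f t\<bar> powr p \<le> G t"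
  shows "in_Lp p I f" "Q f \<le> integral\<^sup>L M G"
proof -
  have fm: "(\<lambda>t. \<bar>f t\<bar> powr p) \<in> borel_measurable M" using f by measurable
  have i: "integrable M (\<lambda>t. \<bar>f t\<bar> powr p)"
  proof (rule Bochner_Integration.integrable_bound[OF G fm])
    show "AE t in M. norm (\<bar>f t\<bar> powr p) \<le> norm (G t)"
    proof (rule AE_I2)
      fix t assume "t \<in> space M"
      then have "\<bar>f t\<bar> powr p \<le> G t" using le by simp
      then show "norm (\<bar>f t\<bar> powr p) \<le> norm (G t)" by simp
    qed
  qed
  then show "in_Lp p I f" using f by (simp add: in_Lp_def)
  show "Q f \<le> integral\<^sup>L M G" unfolding Q_def by (rule integral_mono[OF i G]) (use le in auto)
qed

lemma Lp_zero: "in_Lp p I (\<lambda>_. 0)" "Q (\<lambda>_. 0) = 0"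
  using p_pos by (auto simp: in_Lp_def Q_def)

lemma powr_add_le: "\<bar>a + b\<bar> powr p \<le> 2 powr p * (\<bar>a\<bar> powr p + \<bar>b\<bar> powr p)"
proof -
  have "\<bar>a + b\<bar> \<le> 2 * max \<bar>a\<bar> \<bar>b\<bar>" by auto
  then have "\<bar>a + b\<bar> powr p \<le> (2 * max \<bar>a\<bar> \<bar>b\<bar>) powr p" using p_pos by (intro powr_mono2) auto
  also have "\<dots> = 2 powr p * max \<bar>a\<bar> \<bar>b\<bar> powr p" by (simp add: powr_mult)
  also have "max \<bar>a\<bar> \<bar>b\<bar> powr p \<le> \<bar>a\<bar> powr p + \<bar>b\<bar> powr p" by (cases "\<bar>a\<bar> \<le> \<bar>b\<bar>") (auto simp: max_def)
  finally show ?thesis by simp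
qed

lemma Lp_add:
  assumes f: "in_Lp p I f" and g: "in_Lp p I g"
  shows "in_Lp p I (\<lambda>t. f t + g t)" "Q (\<lambda>t. f t + g t) \<le> 2 powr p * (Q f + Q g)"
proof -
  have m: "(\<lambda>t. f t + g t) \<in> borel_measurable M" using Lp_meas[OF f] Lp_meas[OF g] by measurable
  have G: "integrable M (\<lambda>t. 2 powr p * (\<bar>f t\<bar> powr p + \<bar>g t\<bar> powr p))"
    using Lp_int[OF f] Lp_int[OF g] by auto
  show "in_Lp p I (\<lambda>t. f t + g t)" by (rule Lp_dom(1)[OF m G powr_add_le])
  have "Q (\<lambda>t. f t + g t) \<le> (\<integral>t. 2 powr p * (\<bar>f t\<bar> powr p + \<bar>g t\<bar> powr p) \<partial>M)"
    by (rule Lp_dom(2)[OF m G powr_add_le])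
  also have "\<dots> = 2 powr p * (Q f + Q g)"
    using Lp_int[OF f] Lp_int[OF g] by (simp add: Q_def)
  finally show "Q (\<lambda>t. f t + g t) \<le> 2 powr p * (Q f + Q g)" .
qed

lemma Lp_scale:
  assumes f: "in_Lp p I f"
  shows "in_Lp p I (\<lambda>t. c * f t)" "Q (\<lambda>t. c * f t) = \<bar>c\<bar> powr p * Q f"
proof -
  have eq: "\<And>t. \<bar>c * f t\<bar> powr p = \<bar>c\<bar> powr p * \<bar>f t\<bar> powr p" by (simp add: abs_mult powr_mult)
  show "in_Lp p I (\<lambda>t. c * f t)" using f unfolding in_Lp_def eq by auto
  show "Q (\<lambda>t. c * f t) = \<bar>c\<bar> powr p * Q f" unfolding Q_def eq by simp
qed

lemma Lp_neg: "in_Lp p I f \<Longrightarrow> in_Lp p I (\<lambda>t. - f t) \<and> Q (\<lambda>t. - f t) = Q f"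
  using Lp_scale[of f "-1"] by simp

lemma Lp_diff:
  assumes f: "in_Lp p I f" and g: "in_Lp p I g"
  shows "in_Lp p I (\<lambda>t. f t - g t)" "Q (\<lambda>t. f t - g t) \<le> 2 powr p * (Q f + Q g)"
  using Lp_add[OF f conjunct1[OF Lp_neg[OF g]]] Lp_neg[OF g] by simp_all

lemma Lp_lin: "in_Lp p I f \<Longrightarrow> in_Lp p I g \<Longrightarrow> in_Lp p I (\<lambda>t. a * f t + c * g t)"
  using Lp_add Lp_scale by blast

lemma Lp_sum:
  fixes n :: nat
  shows "(\<And>m. m < n \<Longrightarrow> in_Lp p I (y m)) \<Longrightarrow> in_Lp p I (\<lambda>t. \<Sum>m<n. c m * y m t)"
proof (induction n)
  case 0 then show ?case using Lp_zero by simp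
next
  case (Suc n)
  then show ?case using Lp_add[OF Suc.IH Lp_scale(1)[of "y n" "c n"]] by simp
qed

lemma Q_AE_cong:
  assumes "f \<in> borel_measurable M" "g \<in> borel_measurable M" "AE t in M. f t = g t"
  shows "Q f = Q g"
  unfolding Q_def using assms by (intro integral_cong_AE) auto

lemma Lp_AE_cong:
  assumes "in_Lp p I f" "g \<in> borel_measurable M" "AE t in M. f t = g t"
  shows "in_Lp p I g"
proof -
  have "integrable M (\<lambda>t. \<bar>g t\<bar> powr p)"
    using Lp_int[OF assms(1)] by (rule integrable_cong_AE_imp) (use assms in auto)
  then show ?thesis using assms by (simp add: in_Lp_def)
qed

lemma Q_zero_AE:
  assumes f: "in_Lp p I f" and Q: "Q f = 0"
  shows "AE t in M. f t = 0"
proof -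
  have "AE t in M. \<bar>f t\<bar> powr p = 0"
    using Q Lp_int[OF f] unfolding Q_def by (subst (asm) integral_nonneg_eq_0_iff_AE) auto
  then show ?thesis by eventually_elim simp
qed

lemma nn_Q: "in_Lp p I f \<Longrightarrow> (\<integral>\<^sup>+t. ennreal (\<bar>f t\<bar> powr p) \<partial>M) = ennreal (Q f)"
  unfolding Q_def by (rule nn_integral_eq_integral) (auto simp: in_Lp_def)

lemma Lp_by_nn:
  assumes f: "f \<in> borel_measurable M" and le: "(\<integral>\<^sup>+t. ennreal (\<bar>f t\<bar> powr p) \<partial>M) \<le> ennreal c" and c: "c \<ge> 0"
  shows "in_Lp p I f" "Q f \<le> c"
proof -
  have fm: "(\<lambda>t. \<bar>f t\<bar> powr p) \<in> borel_measurable M" using f by measurable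
  have "integrable M (\<lambda>t. \<bar>f t\<bar> powr p)"
    using le fm by (subst integrable_iff_bounded) (auto simp: top.not_eq_extremum intro: le_less_trans)
  then show i: "in_Lp p I f" using f by (simp add: in_Lp_def)
  show "Q f \<le> c" using nn_Q[OF i] le c by simp
qed

lemma Lp_phi:
  assumes u: "in_Lp p I u"
  shows "in_Lp p I (\<lambda>t. u (phi t))" "Q (\<lambda>t. u (phi t)) = Q u"
proof -
  have m: "(\<lambda>t. u (phi t)) \<in> borel_measurable M" by (rule measurable_compose[OF phi_meas Lp_meas[OF u]])
  have hm: "(\<lambda>s. ennreal (\<bar>u s\<bar> powr p)) \<in> borel_measurable M" using Lp_meas[OF u] by measurable
  have eq: "(\<integral>\<^sup>+t. ennreal (\<bar>u (phi t)\<bar> powr p) \<partial>M) = ennreal (Q u)"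
    using phi_integral[OF hm] nn_Q[OF u] by simp
  have le: "(\<integral>\<^sup>+t. ennreal (\<bar>u (phi t)\<bar> powr p) \<partial>M) \<le> ennreal (Q u)" using eq by simp
  show i: "in_Lp p I (\<lambda>t. u (phi t))" by (rule Lp_by_nn(1)[OF m le Q_nonneg])
  show "Q (\<lambda>t. u (phi t)) = Q u" using nn_Q[OF i] eq Q_nonneg by simp
qed

lemma Lp_L1:
  assumes u: "in_Lp p I u"
  shows "in_Lp p I (\<lambda>t. u (L1 t))" "Q (\<lambda>t. u (L1 t)) \<le> (K / (x 1 - x 0)) * Q u"
proof -
  have d: "x 0 < x 1" using x_strict[of 0 1] N2 by auto
  have m: "(\<lambda>t. u (L1 t)) \<in> borel_measurable M" by (rule measurable_compose[OF L1_meas Lp_meas[OF u]])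
  have hm: "(\<lambda>s. ennreal (\<bar>u s\<bar> powr p)) \<in> borel_measurable M" using Lp_meas[OF u] by measurable
  have "(\<integral>\<^sup>+t. ennreal (\<bar>u (L1 t)\<bar> powr p) \<partial>M) \<le> ennreal (K / (x 1 - x 0)) * ennreal (Q u)"
    using L1_integral[OF hm] nn_Q[OF u] by simp
  also have "\<dots> = ennreal ((K / (x 1 - x 0)) * Q u)" using K_pos d Q_nonneg by (intro ennreal_mult[symmetric]) auto
  finally have le: "(\<integral>\<^sup>+t. ennreal (\<bar>u (L1 t)\<bar> powr p) \<partial>M) \<le> ennreal ((K / (x 1 - x 0)) * Q u)" .
  have c: "0 \<le> (K / (x 1 - x 0)) * Q u" using K_pos d Q_nonneg by simp
  show "in_Lp p I (\<lambda>t. u (L1 t))" "Q (\<lambda>t. u (L1 t)) \<le> (K / (x 1 - x 0)) * Q u"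
    using Lp_by_nn[OF m le c] by auto
qed

lemma Lp_Aphi:
  assumes u: "in_Lp p I u"
  shows "in_Lp p I (\<lambda>t. A t * u (phi t))" "Q (\<lambda>t. A t * u (phi t)) = \<Lambda> powr p * Q u"
proof -
  have m: "(\<lambda>t. A t * u (phi t)) \<in> borel_measurable M"
    using A_meas measurable_compose[OF phi_meas Lp_meas[OF u]] by measurable
  have eq: "\<And>t. t \<in> I \<Longrightarrow> \<bar>A t * u (phi t)\<bar> powr p = \<Lambda> powr p * \<bar>u (phi t)\<bar> powr p"
    using abs_A by (simp add: abs_mult powr_mult)
  have i: "integrable M (\<lambda>t. \<Lambda> powr p * \<bar>u (phi t)\<bar> powr p)" using Lp_int[OF Lp_phi(1)[OF u]] by simp
  show "in_Lp p I (\<lambda>t. A t * u (phi t))" using Lp_dom(1)[OF m i] eq by simp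
  have "Q (\<lambda>t. A t * u (phi t)) = (\<integral>t. \<Lambda> powr p * \<bar>u (phi t)\<bar> powr p \<partial>M)"
    unfolding Q_def by (rule Bochner_Integration.integral_cong) (auto simp: eq)
  also have "\<dots> = \<Lambda> powr p * Q u" using Lp_phi(2)[OF u] by (simp add: Q_def)
  finally show "Q (\<lambda>t. A t * u (phi t)) = \<Lambda> powr p * Q u" .
qed

lemma Lp_L1\<alpha>:
  assumes u: "in_Lp p I u"
  shows "in_Lp p I (\<lambda>s. u (L1 s) / \<alpha> 1 s)" "Q (\<lambda>s. u (L1 s) / \<alpha> 1 s) \<le> (K / (x 1 - x 0)) / \<Lambda> powr p * Q u"
proof -
  have m: "(\<lambda>s. u (L1 s) / \<alpha> 1 s) \<in> borel_measurable M"
    using \<alpha>1_meas measurable_compose[OF L1_meas Lp_meas[OF u]] by measurable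
  have eq: "\<And>t. t \<in> I \<Longrightarrow> \<bar>u (L1 t) / \<alpha> 1 t\<bar> powr p = (1 / \<Lambda> powr p) * \<bar>u (L1 t)\<bar> powr p"
  proof -
    fix t assume "t \<in> I"
    then have a: "\<bar>\<alpha> 1 t\<bar> = \<Lambda>" by (rule abs_\<alpha>1)
    have "\<bar>u (L1 t) / \<alpha> 1 t\<bar> powr p = (\<bar>u (L1 t)\<bar> / \<Lambda>) powr p" by (simp only: abs_divide a)
    also have "\<dots> = (1 / \<Lambda> powr p) * \<bar>u (L1 t)\<bar> powr p" using \<Lambda>pos by (simp add: powr_divide)
    finally show "\<bar>u (L1 t) / \<alpha> 1 t\<bar> powr p = (1 / \<Lambda> powr p) * \<bar>u (L1 t)\<bar> powr p" .
  qed
  have i: "integrable M (\<lambda>t. (1 / \<Lambda> powr p) * \<bar>u (L1 t)\<bar> powr p)" using Lp_int[OF Lp_L1(1)[OF u]] by simp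
  show "in_Lp p I (\<lambda>s. u (L1 s) / \<alpha> 1 s)" using Lp_dom(1)[OF m i] eq by simp
  have "Q (\<lambda>s. u (L1 s) / \<alpha> 1 s) = (\<integral>t. (1 / \<Lambda> powr p) * \<bar>u (L1 t)\<bar> powr p \<partial>M)"
    unfolding Q_def by (rule Bochner_Integration.integral_cong[OF refl], rule eq) simp
  also have "\<dots> = (1 / \<Lambda> powr p) * Q (\<lambda>t. u (L1 t))" by (simp add: Q_def)
  also have "\<dots> \<le> (1 / \<Lambda> powr p) * ((K / (x 1 - x 0)) * Q u)"
    using Lp_L1(2)[OF u] \<Lambda>pos by (intro mult_left_mono) auto
  also have "\<dots> = (K / (x 1 - x 0)) / \<Lambda> powr p * Q u" by simp
  finally show "Q (\<lambda>s. u (L1 s) / \<alpha> 1 s) \<le> (K / (x 1 - x 0)) / \<Lambda> powr p * Q u" .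
qed

end


context fsetting begin

definition "fp b g \<longleftrightarrow> in_Lp p I g \<and> (AE t in M. g t = A t * (g (phi t) - b (phi t)))"

lemma T_eq: "t \<in> I \<Longrightarrow> fractal_T x N \<alpha> (\<lambda>_. 0) b g t = A t * (g (phi t) - b (phi t))"
  by (simp add: fractal_T_def Let_def A_def phi_def)

lemma fpT_iff: "(in_Lp p I g \<and> (AE t in M. fractal_T x N \<alpha> (\<lambda>_. 0) b g t = g t)) \<longleftrightarrow> fp b g"
proof -
  have "(AE t in M. fractal_T x N \<alpha> (\<lambda>_. 0) b g t = g t) \<longleftrightarrow> (AE t in M. g t = A t * (g (phi t) - b (phi t)))"
    by (rule AE_cong) (auto simp: T_eq)
  then show ?thesis by (auto simp: fp_def)
qed

lemma fp_lin:
  assumes "fp b1 g1" "fp b2 g2"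
  shows "fp (\<lambda>t. a * b1 t + c * b2 t) (\<lambda>t. a * g1 t + c * g2 t)"
proof -
  have "in_Lp p I (\<lambda>t. a * g1 t + c * g2 t)" using assms Lp_lin by (auto simp: fp_def)
  moreover have "AE t in M. a * g1 t + c * g2 t = A t * ((a * g1 (phi t) + c * g2 (phi t)) - (a * b1 (phi t) + c * b2 (phi t)))"
  proof -
    have h1: "AE t in M. g1 t = A t * (g1 (phi t) - b1 (phi t))" and h2: "AE t in M. g2 t = A t * (g2 (phi t) - b2 (phi t))"
      using assms unfolding fp_def by auto
    from h1 h2 show ?thesis
    proof eventually_elim
      case (elim t)
      show ?case by (subst elim(1), subst elim(2)) (simp add: algebra_simps)
    qed
  qed
  ultimately show ?thesis by (simp add: fp_def)
qed

lemma fp_zero: "fp (\<lambda>_. 0) (\<lambda>_. 0)" by (simp add: fp_def Lp_zero)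

lemma fp_sum:
  fixes n :: nat
  shows "(\<And>m. m < n \<Longrightarrow> fp (b m) (g m)) \<Longrightarrow> fp (\<lambda>t. \<Sum>m<n. c m * b m t) (\<lambda>t. \<Sum>m<n. c m * g m t)"
proof (induction n)
  case 0 then show ?case using fp_zero by simp
next
  case (Suc n)
  then show ?case using fp_lin[OF Suc.IH, of "b n" "g n" 1 "c n"] by simp
qed

lemma Lam_powr: "\<Lambda> powr p < 1" "\<Lambda> powr p > 0"
proof -
  have "\<Lambda> powr p < 1 powr p" using \<Lambda>pos \<Lambda>1 p_pos by (intro powr_less_mono2) auto
  then show "\<Lambda> powr p < 1" by simp
  show "\<Lambda> powr p > 0" using \<Lambda>pos by simp
qed

lemma fp_Q: assumes "fp b g" "in_Lp p I b" shows "Q g = \<Lambda> powr p * Q (\<lambda>t. g t - b t)"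
proof -
  have gb: "in_Lp p I (\<lambda>t. g t - b t)" using assms Lp_diff by (auto simp: fp_def)
  have "Q g = Q (\<lambda>t. A t * (g (phi t) - b (phi t)))"
    using assms Lp_Aphi(1)[OF gb] by (intro Q_AE_cong) (auto simp: fp_def Lp_meas)
  also have "\<dots> = \<Lambda> powr p * Q (\<lambda>t. g t - b t)" using Lp_Aphi(2)[OF gb] by simp
  finally show ?thesis .
qed

lemma fp_unique:
  assumes "fp b g1" "fp b g2" "in_Lp p I b"
  shows "AE t in M. g1 t = g2 t"
proof -
  have d: "fp (\<lambda>_. 0) (\<lambda>t. g1 t - g2 t)" using fp_lin[OF assms(1,2), of 1 "-1"] by simp
  have "Q (\<lambda>t. g1 t - g2 t) = \<Lambda> powr p * Q (\<lambda>t. g1 t - g2 t)"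
    using fp_Q[OF d] Lp_zero by simp
  then have "Q (\<lambda>t. g1 t - g2 t) = 0" using Lam_powr by (metis mult_cancel_right1 mult_eq_0_iff less_irrefl)
  then have "AE t in M. g1 t - g2 t = 0" using Q_zero_AE d unfolding fp_def by blast
  then show ?thesis by auto
qed

lemma fp_lower:
  assumes "fp b g" "in_Lp p I b"
  shows "Q b \<le> 2 powr p * (1 + 1 / \<Lambda> powr p) * Q g"
proof -
  have g: "in_Lp p I g" using assms by (simp add: fp_def)
  have gb: "in_Lp p I (\<lambda>t. g t - b t)" using assms Lp_diff g by auto
  have e: "Q (\<lambda>t. g t - b t) = Q g / \<Lambda> powr p" using fp_Q[OF assms] Lam_powr by simp
  have "Q b = Q (\<lambda>t. g t - (g t - b t))" by simp
  also have "\<dots> \<le> 2 powr p * (Q g + Q (\<lambda>t. g t - b t))" by (rule Lp_diff(2)[OF g gb])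
  also have "\<dots> = 2 powr p * (1 + 1 / \<Lambda> powr p) * Q g" unfolding e by (simp add: algebra_simps)
  finally show ?thesis .
qed

lemma fp_E:
  assumes "fp b g"
  shows "AE t in M. g t = A t * g (L1 (phi t)) / \<alpha> 1 (phi t)"
proof -
  have fpA: "AE s in M. g s = A s * (g (phi s) - b (phi s))" using assms by (simp add: fp_def)
  have "AE s in M. g (L1 s) = A (L1 s) * (g (phi (L1 s)) - b (phi (L1 s)))" by (rule AE_L1[OF fpA])
  then have "AE s in M. g (L1 s) = \<alpha> 1 s * (g s - b s)"
    by (rule AE_mp[OF _ AE_I2]) (auto simp: phi_L1 A_L1)
  then have "AE t in M. g (L1 (phi t)) = \<alpha> 1 (phi t) * (g (phi t) - b (phi t))" by (rule AE_phi)
  with fpA show ?thesis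
  proof (rule AE_mp[OF _ AE_mp[OF _ AE_I2]], intro impI)
    fix t assume t: "t \<in> space M" and h1: "g (L1 (phi t)) = \<alpha> 1 (phi t) * (g (phi t) - b (phi t))"
      and h2: "g t = A t * (g (phi t) - b (phi t))"
    have "\<alpha> 1 (phi t) \<noteq> 0" using abs_\<alpha>1[OF phi_in[of t]] t \<Lambda>pos by auto
    then show "g t = A t * g (L1 (phi t)) / \<alpha> 1 (phi t)" using h1 h2 by simp
  qed
qed

end



lemma root_bound:
  fixes a r R p :: real and j :: nat
  assumes a: "0 \<le> a" and r: "0 < r" "r \<le> 1" and p: "1 \<le> p" and le: "r ^ j * a powr p \<le> R"
  shows "r ^ j * a \<le> R powr (1 / p)"
proof -
  have rj: "0 < r ^ j" "r ^ j \<le> 1" using r by (auto simp: power_le_one)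
  have "(r ^ j) powr p \<le> (r ^ j) powr 1" using rj p by (intro powr_mono') auto
  then have "(r ^ j) powr p \<le> r ^ j" using rj by simp
  then have "(r ^ j * a) powr p \<le> r ^ j * a powr p"
    using rj a by (simp add: powr_mult mult_right_mono)
  then have "(r ^ j * a) powr p \<le> R" using le by linarith
  then have "((r ^ j * a) powr p) powr (1 / p) \<le> R powr (1 / p)"
    using p by (intro powr_mono2) auto
  also have "((r ^ j * a) powr p) powr (1 / p) = r ^ j * a"
    using p rj a by (simp add: powr_powr)
  finally show ?thesis .
qed

context fsetting begin

definition "\<rho> = sqrt \<Lambda>"

lemma rho: "0 < \<rho>" "\<rho> < 1" "\<rho> * \<rho> = \<Lambda>"
  using \<Lambda>pos \<Lambda>1 by (auto simp: \<rho>_def real_sqrt_lt_1_iff)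

definition "PP b j t = (\<Prod>i<j. A ((phi ^^ i) t))"
definition "trm b j t = PP b j t * b ((phi ^^ j) t)"
definition "gsol b t = - (\<Sum>j. trm b (Suc j) t)"
definition "Mx b t = (\<Sum>j. ennreal (\<rho> ^ j * \<bar>b ((phi ^^ j) t)\<bar> powr p))"

lemma PP_abs: "t \<in> I \<Longrightarrow> \<bar>PP b j t\<bar> = \<Lambda> ^ j"
  by (simp add: PP_def abs_prod abs_A phin_in)

lemma PP_Suc: "PP b (Suc j) t = A t * PP b j (phi t)"
  unfolding PP_def prod.lessThan_Suc_shift by (simp add: funpow_Suc_right del: funpow.simps)

lemma term_Suc: "trm b (Suc j) t = A t * trm b j (phi t)"
  unfolding trm_def PP_Suc by (simp add: funpow_Suc_right del: funpow.simps)

lemma term_0: "trm b 0 t = b t" by (simp add: trm_def PP_def)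

lemma term_meas:
  assumes b: "b \<in> borel_measurable M"
  shows "trm b j \<in> borel_measurable M"
proof -
  have "(\<lambda>t. A ((phi ^^ i) t)) \<in> borel_measurable M" for i
    by (rule measurable_compose[OF phin_meas A_meas])
  then have "PP b j \<in> borel_measurable M" unfolding PP_def by (intro borel_measurable_prod) auto
  moreover have "(\<lambda>t. b ((phi ^^ j) t)) \<in> borel_measurable M"
    by (rule measurable_compose[OF phin_meas b])
  ultimately show ?thesis unfolding trm_def[abs_def] by measurable
qed

lemma gsol_meas: "b \<in> borel_measurable M \<Longrightarrow> gsol b \<in> borel_measurable M"
  unfolding gsol_def[abs_def] using term_meas by measurable

lemma Mx_integral:
  assumes b: "in_Lp p I b"
  shows "(\<integral>\<^sup>+t. Mx b t \<partial>M) = ennreal (Q b / (1 - \<rho>))"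
proof -
  have bm: "b \<in> borel_measurable M" using b by (rule Lp_meas)
  have hm: "(\<lambda>s. ennreal (\<bar>b s\<bar> powr p)) \<in> borel_measurable M" using bm by measurable
  have fm: "(\<lambda>t. ennreal (\<rho> ^ j * \<bar>b ((phi ^^ j) t)\<bar> powr p)) \<in> borel_measurable M" for j
  proof -
    have "(\<lambda>t. b ((phi ^^ j) t)) \<in> borel_measurable M" by (rule measurable_compose[OF phin_meas bm])
    then show ?thesis by measurable
  qed
  have "(\<integral>\<^sup>+t. Mx b t \<partial>M) = (\<Sum>j. \<integral>\<^sup>+t. ennreal (\<rho> ^ j * \<bar>b ((phi ^^ j) t)\<bar> powr p) \<partial>M)"
    unfolding Mx_def by (rule nn_integral_suminf[OF fm])
  also have "\<dots> = (\<Sum>j. ennreal (\<rho> ^ j) * ennreal (Q b))"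
  proof (rule suminf_cong)
    fix j
    have "(\<integral>\<^sup>+t. ennreal (\<rho> ^ j * \<bar>b ((phi ^^ j) t)\<bar> powr p) \<partial>M)
        = (\<integral>\<^sup>+t. ennreal (\<rho> ^ j) * ennreal (\<bar>b ((phi ^^ j) t)\<bar> powr p) \<partial>M)"
      using rho by (intro nn_integral_cong) (simp add: ennreal_mult)
    also have "\<dots> = ennreal (\<rho> ^ j) * (\<integral>\<^sup>+t. ennreal (\<bar>b ((phi ^^ j) t)\<bar> powr p) \<partial>M)"
      using fm by (intro nn_integral_cmult) (simp add: measurable_compose[OF phin_meas hm])
    also have "(\<integral>\<^sup>+t. ennreal (\<bar>b ((phi ^^ j) t)\<bar> powr p) \<partial>M) = ennreal (Q b)"
      using phin_integral[OF hm, of j] nn_Q[OF b] by simp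
    finally show "(\<integral>\<^sup>+t. ennreal (\<rho> ^ j * \<bar>b ((phi ^^ j) t)\<bar> powr p) \<partial>M) = ennreal (\<rho> ^ j) * ennreal (Q b)" .
  qed
  also have "\<dots> = ennreal (Q b) * (\<Sum>j. ennreal (\<rho> ^ j))" by (simp add: mult.commute)
  also have "(\<Sum>j. ennreal (\<rho> ^ j)) = ennreal (1 / (1 - \<rho>))"
    using rho by (subst suminf_ennreal2) (auto simp: suminf_geometric)
  also have "ennreal (Q b) * ennreal (1 / (1 - \<rho>)) = ennreal (Q b / (1 - \<rho>))"
    using rho Q_nonneg by (simp add: ennreal_mult[symmetric])
  finally show ?thesis .
qed

lemma Mx_term_bound:
  assumes t: "t \<in> I" and fin: "Mx b t \<noteq> \<infinity>"
  shows "\<bar>trm b j t\<bar> \<le> \<rho> ^ j * enn2real (Mx b t) powr (1 / p)"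
proof -
  let ?a = "\<bar>b ((phi ^^ j) t)\<bar>"
  have "ennreal (\<rho> ^ j * ?a powr p) \<le> Mx b t"
    unfolding Mx_def using sum_le_suminf[of "\<lambda>j. ennreal (\<rho> ^ j * \<bar>b ((phi ^^ j) t)\<bar> powr p)" "{j}"] by simp
  then have le: "\<rho> ^ j * ?a powr p \<le> enn2real (Mx b t)"
  proof -
    have "enn2real (ennreal (\<rho> ^ j * ?a powr p)) \<le> enn2real (Mx b t)"
      using \<open>ennreal (\<rho> ^ j * ?a powr p) \<le> Mx b t\<close> fin by (intro enn2real_mono) (auto simp: top.not_eq_extremum)
    moreover have "0 \<le> \<rho> ^ j * ?a powr p" using rho by simp
    ultimately show ?thesis by simp
  qed
  have "\<bar>trm b j t\<bar> = \<Lambda> ^ j * ?a" by (simp add: trm_def abs_mult PP_abs t)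
  also have "\<dots> = \<rho> ^ j * (\<rho> ^ j * ?a)" using rho by (simp flip: power_mult_distrib)
  also have "\<dots> \<le> \<rho> ^ j * enn2real (Mx b t) powr (1 / p)"
    using root_bound[OF _ rho(1) _ p1 le] rho by (intro mult_left_mono) auto
  finally show ?thesis .
qed

lemma Mx_summable:
  assumes t: "t \<in> I" and fin: "Mx b t \<noteq> \<infinity>"
  shows "summable (\<lambda>j. trm b j t)"
  by (rule summable_comparison_test'[where g="\<lambda>j. \<rho> ^ j * enn2real (Mx b t) powr (1 / p)" and N=0])
     (use rho Mx_term_bound[OF t fin] in \<open>auto intro: summable_mult2\<close>)

lemma gsol_fix:
  assumes t: "t \<in> I" and s: "summable (\<lambda>j. trm b j (phi t))"
  shows "gsol b t = A t * (gsol b (phi t) - b (phi t))"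
proof -
  have "(\<Sum>j. trm b (Suc j) t) = (\<Sum>j. A t * trm b j (phi t))" by (simp add: term_Suc)
  also have "\<dots> = A t * (\<Sum>j. trm b j (phi t))" using s by (rule suminf_mult)
  also have "(\<Sum>j. trm b j (phi t)) = (\<Sum>j. trm b (Suc j) (phi t)) + b (phi t)"
    using suminf_split_head[OF s] by (simp add: term_0)
  finally show ?thesis by (simp add: gsol_def algebra_simps)
qed

lemma gsol_bound:
  assumes t: "t \<in> I" and fin: "Mx b t \<noteq> \<infinity>"
  shows "\<bar>gsol b t\<bar> \<le> enn2real (Mx b t) powr (1 / p) / (1 - \<rho>)"
proof -
  let ?c = "enn2real (Mx b t) powr (1 / p)"
  have "\<bar>gsol b t\<bar> = norm (\<Sum>j. trm b (Suc j) t)" by (simp add: gsol_def)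
  also have "\<dots> \<le> (\<Sum>j. \<rho> ^ j * ?c)"
  proof (rule norm_suminf_le)
    fix j
    have "\<bar>trm b (Suc j) t\<bar> \<le> \<rho> ^ Suc j * ?c" by (rule Mx_term_bound[OF t fin])
    also have "\<dots> \<le> \<rho> ^ j * ?c" using rho by (intro mult_right_mono) (auto simp: power_decreasing)
    finally show "norm (trm b (Suc j) t) \<le> \<rho> ^ j * ?c" by simp
    show "summable (\<lambda>j. \<rho> ^ j * ?c)" using rho by (intro summable_mult2) auto
  qed
  also have "\<dots> = ?c / (1 - \<rho>)" using rho by (simp add: suminf_mult2[symmetric] suminf_geometric)
  finally show ?thesis .
qed

definition "C1 = (1 / (1 - \<rho>)) powr p / (1 - \<rho>)"

lemma C1_pos: "C1 > 0" using rho by (simp add: C1_def)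

lemma fp_exists:
  assumes b: "in_Lp p I b"
  shows "fp b (gsol b) \<and> Q (gsol b) \<le> C1 * Q b"
proof -
  have bm: "b \<in> borel_measurable M" using b by (rule Lp_meas)
  have Mxm: "Mx b \<in> borel_measurable M"
  proof -
    have "(\<lambda>t. ennreal (\<rho> ^ j * \<bar>b ((phi ^^ j) t)\<bar> powr p)) \<in> borel_measurable M" for j
    proof -
      have "(\<lambda>t. b ((phi ^^ j) t)) \<in> borel_measurable M" by (rule measurable_compose[OF phin_meas bm])
      then show ?thesis by measurable
    qed
    then show ?thesis unfolding Mx_def[abs_def] by measurable
  qed
  have gm: "gsol b \<in> borel_measurable M" using gsol_meas[OF bm] .
  define D where "D = (1 / (1 - \<rho>)) powr p"
  have D: "D > 0" using rho by (simp add: D_def)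
  have pw: "ennreal (\<bar>gsol b t\<bar> powr p) \<le> ennreal D * Mx b t" if t: "t \<in> space M" for t
  proof (cases "Mx b t = \<infinity>")
    case True then show ?thesis using D by (simp add: ennreal_mult_top)
  next
    case False
    let ?R = "enn2real (Mx b t)"
    have R: "0 \<le> ?R" by simp
    have "\<bar>gsol b t\<bar> powr p \<le> (?R powr (1 / p) / (1 - \<rho>)) powr p"
      using gsol_bound[OF _ False] t p_pos by (intro powr_mono2) auto
    also have "\<dots> = D * ?R"
      using rho p_pos R by (simp add: D_def powr_divide powr_powr)
    finally have "ennreal (\<bar>gsol b t\<bar> powr p) \<le> ennreal (D * ?R)" by (rule ennreal_leI)
    also have "\<dots> = ennreal D * Mx b t" using D False by (simp add: ennreal_mult less_top)
    finally show ?thesis .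
  qed
  have "(\<integral>\<^sup>+t. ennreal (\<bar>gsol b t\<bar> powr p) \<partial>M) \<le> (\<integral>\<^sup>+t. ennreal D * Mx b t \<partial>M)"
    by (rule nn_integral_mono) (rule pw)
  also have "\<dots> = ennreal D * ennreal (Q b / (1 - \<rho>))"
    using Mxm by (simp add: nn_integral_cmult Mx_integral[OF b])
  also have "\<dots> = ennreal (C1 * Q b)"
    using D rho Q_nonneg by (simp add: ennreal_mult[symmetric] C1_def D_def)
  finally have le: "(\<integral>\<^sup>+t. ennreal (\<bar>gsol b t\<bar> powr p) \<partial>M) \<le> ennreal (C1 * Q b)" .
  have c: "0 \<le> C1 * Q b" using C1_pos Q_nonneg by simp
  note L = Lp_by_nn[OF gm le c]
  have fin: "AE t in M. Mx b t \<noteq> \<infinity>"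
    by (rule nn_integral_noteq_infinite[OF Mxm]) (simp add: Mx_integral[OF b])
  have "AE t in M. Mx b (phi t) \<noteq> \<infinity>" by (rule AE_phi[OF fin])
  then have "AE t in M. gsol b t = A t * (gsol b (phi t) - b (phi t))"
  proof (rule AE_mp[OF _ AE_I2], intro impI)
    fix t assume t: "t \<in> space M" and f: "Mx b (phi t) \<noteq> \<infinity>"
    have "phi t \<in> I" using t phi_in by simp
    then show "gsol b t = A t * (gsol b (phi t) - b (phi t))"
      using gsol_fix Mx_summable f t by simp
  qed
  then show ?thesis using L by (simp add: fp_def)
qed

lemma fp_upper:
  assumes "fp b g" "in_Lp p I b"
  shows "Q g \<le> C1 * Q b"
proof -
  have e: "fp b (gsol b)" "Q (gsol b) \<le> C1 * Q b" using fp_exists[OF assms(2)] by auto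
  have "AE t in M. g t = gsol b t" by (rule fp_unique[OF assms(1) e(1) assms(2)])
  then have "Q g = Q (gsol b)"
    using assms e by (intro Q_AE_cong) (auto simp: fp_def Lp_meas)
  then show ?thesis using e by simp
qed

end


context fsetting begin

lemma Lp_norm_Q: "Lp_norm p I g = Q g powr (1 / p)"
  by (simp add: Lp_norm_def Q_def)

lemma powr_inv_p: "0 \<le> q \<Longrightarrow> (q powr (1 / p)) powr p = q"
  using p_pos by (simp add: powr_powr)

lemma tendsto_Q: "Lp_tendsto p I s f \<longleftrightarrow> (\<lambda>n. Q (\<lambda>t. s n t - f t)) \<longlonglongrightarrow> 0"
proof
  assume "Lp_tendsto p I s f"
  then have l: "(\<lambda>n. Q (\<lambda>t. s n t - f t) powr (1 / p)) \<longlonglongrightarrow> 0" by (simp add: Lp_tendsto_def Lp_norm_Q)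
  have "(\<lambda>n. (Q (\<lambda>t. s n t - f t) powr (1 / p)) powr p) \<longlonglongrightarrow> 0"
    by (rule tendsto_zero_powrI[OF l tendsto_const]) (use p_pos in auto)
  then show "(\<lambda>n. Q (\<lambda>t. s n t - f t)) \<longlonglongrightarrow> 0" by (simp add: powr_inv_p Q_nonneg)
next
  assume l: "(\<lambda>n. Q (\<lambda>t. s n t - f t)) \<longlonglongrightarrow> 0"
  have "(\<lambda>n. Q (\<lambda>t. s n t - f t) powr (1 / p)) \<longlonglongrightarrow> 0"
    by (rule tendsto_zero_powrI[OF l tendsto_const]) (use p_pos Q_nonneg in auto)
  then show "Lp_tendsto p I s f" by (simp add: Lp_tendsto_def Lp_norm_Q)
qed

lemma norm_lt_iff: assumes e: "0 < e" shows "Lp_norm p I g < e \<longleftrightarrow> Q g < e powr p"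
proof
  assume "Lp_norm p I g < e"
  then have "Q g powr (1 / p) < e" by (simp add: Lp_norm_Q)
  then have "(Q g powr (1 / p)) powr p < e powr p" using p_pos by (intro powr_less_mono2) auto
  then show "Q g < e powr p" by (simp add: powr_inv_p Q_nonneg)
next
  assume "Q g < e powr p"
  then have "Q g powr (1 / p) < (e powr p) powr (1 / p)" using p_pos Q_nonneg by (intro powr_less_mono2) auto
  then show "Lp_norm p I g < e" using e p_pos by (simp add: Lp_norm_Q powr_powr)
qed

definition "Eop u t = u t - A t * u (L1 (phi t)) / \<alpha> 1 (phi t)"
definition "C3 = 2 powr p * (1 + K / (x 1 - x 0))"

lemma E_bound:
  assumes u: "in_Lp p I u"
  shows "in_Lp p I (Eop u)" "Q (Eop u) \<le> C3 * Q u"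
proof -
  define v where "v s = u (L1 s) / \<alpha> 1 s" for s
  have v: "in_Lp p I v" "Q v \<le> (K / (x 1 - x 0)) / \<Lambda> powr p * Q u"
    using Lp_L1\<alpha>[OF u] unfolding v_def[abs_def] by auto
  have eq: "Eop u = (\<lambda>t. u t - A t * v (phi t))" by (simp add: Eop_def v_def fun_eq_iff)
  note av = Lp_Aphi[OF v(1)]
  show "in_Lp p I (Eop u)" unfolding eq by (rule Lp_diff(1)[OF u av(1)])
  have "Q (Eop u) \<le> 2 powr p * (Q u + Q (\<lambda>t. A t * v (phi t)))" unfolding eq by (rule Lp_diff(2)[OF u av(1)])
  also have "Q (\<lambda>t. A t * v (phi t)) \<le> (K / (x 1 - x 0)) * Q u"
  proof -
    have "Q (\<lambda>t. A t * v (phi t)) = \<Lambda> powr p * Q v" by (rule av(2))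
    also have "\<dots> \<le> \<Lambda> powr p * ((K / (x 1 - x 0)) / \<Lambda> powr p * Q u)" using v(2) \<Lambda>pos by (intro mult_left_mono) auto
    also have "\<dots> = (K / (x 1 - x 0)) * Q u" using Lam_powr by simp
    finally show ?thesis .
  qed
  finally show "Q (Eop u) \<le> C3 * Q u" by (simp add: C3_def algebra_simps mult_left_mono)
qed

lemma C3_pos: "C3 > 0"
proof -
  have "x 0 < x 1" using x_strict[of 0 1] N2 by auto
  then show ?thesis using K_pos by (simp add: C3_def add_pos_nonneg)
qed

lemma E_fp: "fp b g \<Longrightarrow> AE t in M. Eop g t = 0"
  using fp_E by (auto simp: Eop_def elim!: AE_mp)

end


lemma ex1_uniq: "\<exists>!x. P x \<Longrightarrow> P a \<Longrightarrow> P b \<Longrightarrow> a = b" by blast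

context fsetting begin

lemma main:
  assumes basis: "Lp_schauder_basis p I b"
  shows "Lp_schauder_sequence p I (\<lambda>m. fractal_fn p x N \<alpha> (\<lambda>_. 0) (b m))"
proof -
  define Y where "Y m = fractal_fn p x N \<alpha> (\<lambda>_. 0) (b m)" for m
  have B1: "\<And>m. in_Lp p I (b m)" using basis by (simp add: Lp_schauder_basis_def Lp_schauder_basis_of_def)
  have B2: "\<And>f. in_Lp p I f \<Longrightarrow> \<exists>!c. Lp_tendsto p I (\<lambda>n t. \<Sum>m<n. c m * b m t) f"
    using basis by (simp add: Lp_schauder_basis_def Lp_schauder_basis_of_def)
  have fpY: "fp (b m) (Y m)" for m
  proof -
    have ex: "\<exists>g. in_Lp p I g \<and> (AE t in M. fractal_T x N \<alpha> (\<lambda>_. 0) (b m) g t = g t)"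
      using fpT_iff[where g="gsol (b m)" and b="b m"] fp_exists[OF B1[of m]] by blast
    have "in_Lp p I (Y m) \<and> (AE t in M. fractal_T x N \<alpha> (\<lambda>_. 0) (b m) (Y m) t = Y m t)"
      unfolding Y_def fractal_fn_def by (rule someI_ex[OF ex])
    then show ?thesis using fpT_iff[where g="Y m" and b="b m"] by blast
  qed
  have LY: "in_Lp p I (Y m)" for m using fpY by (simp add: fp_def)
  define SY where "SY c n t = (\<Sum>m<n. c m * Y m t)" for c n t
  define SB where "SB c n t = (\<Sum>m<n. c m * b m t)" for c n t
  have fpS: "fp (SB c n) (SY c n)" for c n
    unfolding SB_def[abs_def] SY_def[abs_def] by (rule fp_sum) (rule fpY)
  have LSY: "in_Lp p I (SY c n)" for c n unfolding SY_def[abs_def] by (rule Lp_sum) (rule LY)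
  have LSB: "in_Lp p I (SB c n)" for c n unfolding SB_def[abs_def] by (rule Lp_sum) (rule B1)
  have C2: "2 powr p * (1 + 1 / \<Lambda> powr p) \<ge> 0" by simp

  have span: "Y m \<in> Lp_closed_span p I Y" for m
  proof -
    have nrm: "Lp_norm p I (\<lambda>t. Y m t - (\<Sum>i<Suc m. (if i = m then 1 else 0) * Y i t)) < e" if e: "e > 0" for e
    proof -
      have "(\<Sum>i<Suc m. (if i = m then 1 else 0) * Y i t) = Y m t" for t
      proof -
        have "(\<Sum>i<Suc m. (if i = m then 1 else 0) * Y i t) = (\<Sum>i\<in>{..<Suc m}. if i = m then Y i t else 0)"
          by (rule sum.cong) auto
        also have "\<dots> = Y m t" by (subst sum.delta) auto
        finally show ?thesis .
      qed
      then have "(\<lambda>t. Y m t - (\<Sum>i<Suc m. (if i = m then 1 else 0) * Y i t)) = (\<lambda>t. 0)"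
        by simp
      moreover have "Lp_norm p I (\<lambda>t. 0) = 0" using p_pos by (simp add: Lp_norm_Q Lp_zero)
      ultimately show ?thesis using e by simp
    qed
    show ?thesis unfolding Lp_closed_span_def mem_Collect_eq
    proof (intro conjI allI impI)
      show "in_Lp p I (Y m)" by (rule LY)
      fix e :: real assume "e > 0"
      then show "\<exists>k c. Lp_norm p I (\<lambda>t. Y m t - (\<Sum>m<k. c m * Y m t)) < e"
        by (intro exI[of _ "Suc m"] exI[of _ "\<lambda>i. if i = m then 1 else 0"] nrm \<open>e > 0\<close>)
    qed
  qed

  have exist: "\<exists>c. Lp_tendsto p I (SY c) f" if f: "f \<in> Lp_closed_span p I Y" for f
  proof -
    have Lf: "in_Lp p I f" using f by (simp add: Lp_closed_span_def)
    have approx: "\<exists>k c. Q (\<lambda>t. f t - SY c k t) < e" if e: "e > 0" for e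
    proof -
      have "e powr (1 / p) > 0" using e by simp
      then obtain k c where "Lp_norm p I (\<lambda>t. f t - (\<Sum>m<k. c m * Y m t)) < e powr (1 / p)"
        using f unfolding Lp_closed_span_def by blast
      then have "Q (\<lambda>t. f t - SY c k t) < (e powr (1 / p)) powr p"
        using norm_lt_iff[OF \<open>e powr (1 / p) > 0\<close>] by (simp add: SY_def)
      then show ?thesis using e by (auto simp: powr_inv_p)
    qed
    have QE0: "Q (Eop f) = 0"
    proof (rule ccontr)
      assume ne: "Q (Eop f) \<noteq> 0"
      then have pos: "Q (Eop f) > 0" using Q_nonneg[of "Eop f"] by simp
      define e where "e = Q (Eop f) / (2 * C3)"
      have "e > 0" using pos C3_pos by (simp add: e_def)
      then obtain k c where kc: "Q (\<lambda>t. f t - SY c k t) < e" using approx by blast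
      let ?u = "\<lambda>t. f t - SY c k t"
      have Lu: "in_Lp p I ?u" by (rule Lp_diff(1)[OF Lf LSY])
      have "AE t in M. Eop (SY c k) t = 0" by (rule E_fp[OF fpS])
      then have "AE t in M. Eop f t = Eop ?u t"
      proof eventually_elim
        case (elim t)
        have "Eop ?u t = Eop f t - Eop (SY c k) t" by (simp add: Eop_def diff_divide_distrib algebra_simps)
        then show ?case using elim by simp
      qed
      then have "Q (Eop f) = Q (Eop ?u)"
        using E_bound(1)[OF Lf] E_bound(1)[OF Lu] by (intro Q_AE_cong) (auto simp: Lp_meas)
      also have "\<dots> \<le> C3 * Q ?u" by (rule E_bound(2)[OF Lu])
      also have "\<dots> \<le> C3 * e" using kc C3_pos by simp
      also have "\<dots> = Q (Eop f) / 2" using C3_pos by (simp add: e_def)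
      finally show False using pos by simp
    qed
    have E0: "AE t in M. Eop f t = 0" by (rule Q_zero_AE[OF E_bound(1)[OF Lf] QE0])
    define h where "h s = f s - f (L1 s) / \<alpha> 1 s" for s
    have Lh: "in_Lp p I h" unfolding h_def[abs_def] by (rule Lp_diff(1)[OF Lf Lp_L1\<alpha>(1)[OF Lf]])
    have fph: "fp h f"
    proof -
      have "AE t in M. f t = A t * (f (phi t) - h (phi t))"
        using E0
      proof eventually_elim
        case (elim t)
        then show ?case by (simp add: h_def Eop_def)
      qed
      then show ?thesis unfolding fp_def using Lf by simp
    qed
    obtain c where c: "Lp_tendsto p I (SB c) h" using B2[OF Lh] unfolding SB_def[abs_def] by blast
    have lim: "(\<lambda>n. Q (\<lambda>t. SB c n t - h t)) \<longlonglongrightarrow> 0" using c by (simp add: tendsto_Q)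
    have bound: "Q (\<lambda>t. SY c n t - f t) \<le> C1 * Q (\<lambda>t. SB c n t - h t)" for n
    proof (rule fp_upper)
      show "fp (\<lambda>t. SB c n t - h t) (\<lambda>t. SY c n t - f t)" using fp_lin[OF fpS[of c n] fph, of 1 "-1"] by simp
      show "in_Lp p I (\<lambda>t. SB c n t - h t)" by (rule Lp_diff(1)[OF LSB Lh])
    qed
    have "(\<lambda>n. C1 * Q (\<lambda>t. SB c n t - h t)) \<longlonglongrightarrow> C1 * 0" by (intro tendsto_mult tendsto_const lim)
    then have X: "(\<lambda>n. C1 * Q (\<lambda>t. SB c n t - h t)) \<longlonglongrightarrow> 0" by simp
    have "(\<lambda>n. Q (\<lambda>t. SY c n t - f t)) \<longlonglongrightarrow> 0"
      by (rule tendsto_sandwich[OF always_eventually always_eventually tendsto_const X]) (simp_all add: Q_nonneg bound)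
    then show ?thesis by (auto simp: tendsto_Q)
  qed

  have uniq: "c = d" if f: "f \<in> Lp_closed_span p I Y" and c: "Lp_tendsto p I (SY c) f" and d: "Lp_tendsto p I (SY d) f" for c d f
  proof -
    define e where "e m = c m - d m" for m
    have Lf: "in_Lp p I f" using f by (simp add: Lp_closed_span_def)
    have lc: "(\<lambda>n. Q (\<lambda>t. SY c n t - f t)) \<longlonglongrightarrow> 0" using c by (simp add: tendsto_Q)
    have ld: "(\<lambda>n. Q (\<lambda>t. SY d n t - f t)) \<longlonglongrightarrow> 0" using d by (simp add: tendsto_Q)
    have bnd: "Q (SB e n) \<le> 2 powr p * (1 + 1 / \<Lambda> powr p) * (2 powr p * (Q (\<lambda>t. SY c n t - f t) + Q (\<lambda>t. SY d n t - f t)))" for n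
    proof -
      have "Q (SB e n) \<le> 2 powr p * (1 + 1 / \<Lambda> powr p) * Q (SY e n)" by (rule fp_lower[OF fpS LSB])
      also have "SY e n = (\<lambda>t. (SY c n t - f t) - (SY d n t - f t))"
        by (simp add: SY_def e_def fun_eq_iff sum_subtractf algebra_simps)
      also have "Q \<dots> \<le> 2 powr p * (Q (\<lambda>t. SY c n t - f t) + Q (\<lambda>t. SY d n t - f t))"
        by (rule Lp_diff(2)[OF Lp_diff(1)[OF LSY Lf] Lp_diff(1)[OF LSY Lf]])
      finally show ?thesis using C2 by (simp add: mult_left_mono)
    qed
    have "(\<lambda>n. 2 powr p * (1 + 1 / \<Lambda> powr p) * (2 powr p * (Q (\<lambda>t. SY c n t - f t) + Q (\<lambda>t. SY d n t - f t))))
          \<longlonglongrightarrow> 2 powr p * (1 + 1 / \<Lambda> powr p) * (2 powr p * (0 + 0))"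
      by (intro tendsto_mult tendsto_add tendsto_const lc ld)
    then have "(\<lambda>n. 2 powr p * (1 + 1 / \<Lambda> powr p) * (2 powr p * (Q (\<lambda>t. SY c n t - f t) + Q (\<lambda>t. SY d n t - f t)))) \<longlonglongrightarrow> 0"
      by simp
    then have X: "(\<lambda>n. 2 powr p * (1 + 1 / \<Lambda> powr p) * (2 powr p * (Q (\<lambda>t. SY c n t - f t) + Q (\<lambda>t. SY d n t - f t)))) \<longlonglongrightarrow> 0" .
    have "(\<lambda>n. Q (SB e n)) \<longlonglongrightarrow> 0"
      by (rule tendsto_sandwich[OF always_eventually always_eventually tendsto_const X]) (simp_all add: Q_nonneg bnd)
    then have t1: "Lp_tendsto p I (\<lambda>n t. \<Sum>m<n. e m * b m t) (\<lambda>_. 0)"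
      using SB_def[abs_def] by (simp add: tendsto_Q)
    have t2: "Lp_tendsto p I (\<lambda>n t. \<Sum>m<n. (\<lambda>_. 0) m * b m t) (\<lambda>_. 0)"
      by (simp add: tendsto_Q Lp_zero)
    have ex: "\<exists>!c. Lp_tendsto p I (\<lambda>n t. \<Sum>m<n. c m * b m t) (\<lambda>_. 0)" by (rule B2[OF Lp_zero(1)])
    have "e = (\<lambda>_. 0)"
      using ex1_uniq[where P="\<lambda>c. Lp_tendsto p I (\<lambda>n t. \<Sum>m<n. c m * b m t) (\<lambda>_. 0)" and a=e and b="\<lambda>_. 0", OF ex t1] t2
      by fast
    then show "c = d" by (auto simp: e_def fun_eq_iff)
  qed
  have Yeq: "(\<lambda>m. fractal_fn p x N \<alpha> (\<lambda>_. 0) (b m)) = Y" by (simp add: Y_def fun_eq_iff)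
  have SYeq: "(\<lambda>n t. \<Sum>m<n. c m * Y m t) = SY c" for c by (simp add: SY_def fun_eq_iff)
  show ?thesis
    unfolding Lp_schauder_sequence_def Lp_schauder_basis_of_def Yeq SYeq
  proof (intro conjI allI ballI)
    fix m show "Y m \<in> Lp_closed_span p I Y" by (rule span)
  next
    fix f assume f: "f \<in> Lp_closed_span p I Y"
    obtain c where c: "Lp_tendsto p I (SY c) f" using exist[OF f] by blast
    show "\<exists>!c. Lp_tendsto p I (SY c) f"
    proof (rule ex1I[of _ c])
      show "Lp_tendsto p I (SY c) f" by (rule c)
      fix y assume "Lp_tendsto p I (SY y) f"
      then show "y = c" by (rule sym[OF uniq[OF f c]])
    qed
  qed
qed

end


theorem proposition6p4:
  fixes p \<Lambda> :: real and N :: nat and x :: "nat \<Rightarrow> real"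
    and \<alpha> :: "nat \<Rightarrow> real \<Rightarrow> real" and b :: "nat \<Rightarrow> real \<Rightarrow> real"
  assumes "1 \<le> p"
    and "N \<ge> 2"
    and "\<And>i. i < N \<Longrightarrow> x i < x (Suc i)"
    and "\<And>n. 1 \<le> n \<Longrightarrow> n \<le> N \<Longrightarrow> \<alpha> n \<in> borel_measurable (lebesgue_on (Ival x N))"
    and "\<And>n t. 1 \<le> n \<Longrightarrow> n \<le> N \<Longrightarrow> t \<in> Ival x N \<Longrightarrow> \<alpha> n t \<in> {\<Lambda>, - \<Lambda>}"
    and "0 < \<Lambda>" and "\<Lambda> < 1"
    and "Lp_schauder_basis p (Ival x N) b"
  shows "Lp_schauder_sequence p (Ival x N) (\<lambda>m. fractal_fn p x N \<alpha> (\<lambda>_. 0) (b m))"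
proof -
  interpret fsetting p \<Lambda> N x \<alpha>
    by unfold_locales (use assms in auto)
  show ?thesis by (rule main[OF assms(8)])
qed

end
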